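(* Let $d\ge1$, $s\in(0,1)$ and $0<\lambda\le\Lambda$. There exists $\gamma>0$, depending only on $d,s,\lambda,\Lambda$, with the following property. Let $K:\mathbb{R}^d\to\mathbb{R}$ be a measurable kernel with $\lambda|y|^{-d-s}\le K(y)\le\Lambda|y|^{-d-s}$ and $K(y)=K(-y)$ for all $y\ne0$. Let $E\subset\mathbb{R}^d$ be a Borel set, $x\in\partial E$ and $r_0>0$. If $|E\cap B_r(x)|\le\gamma|B_r|$ for all $r\in(0,r_0]$, then \[ H_{K,E}(x):=\lim_{\varepsilon\to0^+}\int_{\mathbb{R}^d\setminus B_\varepsilon(x)}\tilde\chi_E(y)K(x-y)\,dy=+\infty, \] that is, the limit exists and equals $+\infty$.
   Context: $B_\rho(x)$ is the open ball of radius $\rho$ centred at $x$, $B_\rho=B_\rho(0)$, and $|F|$ denotes Lebesgue measure. $\tilde\chi_E=\chi_{\mathbb{R}^d\setminus E}-\chi_E$. *)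

theory Defs
  imports "HOL-Analysis.Analysis"
begin

definition chi_tilde :: "'a set \<Rightarrow> 'a \<Rightarrow> real" where
  "chi_tilde E y = indicator (- E) y - indicator E y"

definition H_trunc :: "('a::euclidean_space \<Rightarrow> real) \<Rightarrow> 'a set \<Rightarrow> 'a \<Rightarrow> real \<Rightarrow> real" where
  "H_trunc K E x \<epsilon> = (LINT y : - ball x \<epsilon> | lebesgue. chi_tilde E y * K (x - y))"

end

theory Submission
  imports Defs "HOL-Real_Asymp.Real_Asymp"
begin


lemma exN:
  fixes \<rho> t :: real
  assumes "0 < \<rho>" "\<rho> \<le> t"
  shows "\<exists>N. 2^N*\<rho> \<le> t \<and> t < 2^(Suc N)*\<rho>"
proof (rule ccontr)
  assume H: "\<not> ?thesis"
  have "\<forall>N. (2::real)^N*\<rho> \<le> t"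
  proof
    fix N show "(2::real)^N*\<rho> \<le> t"
      by (induction N) (use H assms in \<open>auto simp: not_less\<close>)
  qed
  moreover obtain N where "t/\<rho> < 2^N" using real_arch_pow[of 2 "t/\<rho>"] by auto
  ultimately show False using assms by (auto simp: field_simps dest: spec[of _ N])
qed

lemma pow2_powr:
  fixes \<rho> a :: real
  assumes "0 < \<rho>"
  shows "(2^j*\<rho>) powr a = (2 powr a)^j * \<rho> powr a"
  using assms by (simp add: powr_mult powr_realpow[symmetric] powr_powr mult.commute powr_power)

lemma meas_ball:
  assumes "0 \<le> r"
  shows "measure lebesgue (ball (c::'a::euclidean_space) r) = unit_ball_vol DIM('a) * r ^ DIM('a)"
  using content_ball[OF assms] by simp

lemma emeas_ball:
  assumes "0 \<le> r"
  shows "emeasure lebesgue (ball (c::'a::euclidean_space) r) = ennreal (unit_ball_vol DIM('a) * r ^ DIM('a))"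
  using emeasure_ball[OF assms] by simp

lemma meas_shift:
  fixes K :: "'a::euclidean_space \<Rightarrow> real"
  assumes "K \<in> borel_measurable lebesgue"
  shows "(\<lambda>y. K (x - y)) \<in> borel_measurable lebesgue"
proof -
  have tr: "(\<lambda>y. a + y) \<in> lebesgue \<rightarrow>\<^sub>M lebesgue" for a :: 'a
  proof (rule measurableI)
    fix A :: "'a set" assume "A \<in> sets lebesgue"
    then have "(\<lambda>y. - a + y) ` A \<in> sets lebesgue" by (rule lebesgue_sets_translation)
    moreover have "(\<lambda>y. - a + y) ` A = (\<lambda>y. a + y) -` A \<inter> space lebesgue"
    proof (intro set_eqI iffI)
      fix y assume "y \<in> (\<lambda>y. - a + y) ` A"
      then obtain z where "z \<in> A" "y = -a + z" by auto
      then show "y \<in> (\<lambda>y. a + y) -` A \<inter> space lebesgue" by simp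
    next
      fix y assume "y \<in> (\<lambda>y. a + y) -` A \<inter> space lebesgue"
      then have "a + y \<in> A" by simp
      moreover have "y = -a + (a + y)" by simp
      ultimately show "y \<in> (\<lambda>y. - a + y) ` A" by blast
    qed
    ultimately show "(\<lambda>y. a + y) -` A \<inter> space lebesgue \<in> sets lebesgue" by simp
  qed auto
  have "(\<lambda>y. x + (-1::real) *\<^sub>R y) \<in> lebesgue \<rightarrow>\<^sub>M lebesgue"
    using measurable_comp[OF lebesgue_measurable_scaling[of "-1"] tr[of x]] by (simp add: o_def)
  from measurable_comp[OF this assms] show ?thesis by (simp add: o_def)
qed



lemma ennreal_le_suminf: "(f N::ennreal) \<le> suminf f"
  using sum_le_suminf[of f "{N}"] by (simp add: summableI)

lemma integ_tail:
  fixes x :: "'a::euclidean_space" and s \<rho> :: real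
  assumes s: "0 < s" and r: "0 < \<rho>"
  shows "integrable lebesgue (\<lambda>y. indicator (- ball x \<rho>) y * dist x y powr (- real DIM('a) - s))"
proof -
  define p where "p = - real DIM('a) - s"
  define \<omega> where "\<omega> = unit_ball_vol (real DIM('a))"
  define q where "q = (2::real) powr (-s)"
  define a where "a j = (2^j*\<rho>) powr p * (\<omega> * (2^(Suc j)*\<rho>)^DIM('a))" for j
  have \<omega>: "\<omega> > 0" unfolding \<omega>_def by simp
  have q: "0 < q" "q < 1" unfolding q_def using s powr_less_mono[of "-s" 0 "2::real"] by auto
  have aeq: "a j = (\<omega> * 2^DIM('a) * \<rho> powr (-s)) * q^j" for j
  proof -
    have "a j = \<omega> * 2^DIM('a) * ((2 powr p)^j * (2^DIM('a))^j) * (\<rho> powr p * \<rho>^DIM('a))"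
      unfolding a_def pow2_powr[OF r] by (simp add: power_mult_distrib power_mult[symmetric] mult.commute mult.left_commute)
    also have "(2 powr p)^j * (2^DIM('a))^j = q^j"
    proof -
      have "2 powr p * 2^DIM('a) = q"
        by (simp add: q_def p_def powr_realpow[symmetric] powr_add[symmetric])
      then show ?thesis by (simp add: power_mult_distrib[symmetric])
    qed
    also have "\<rho> powr p * \<rho>^DIM('a) = \<rho> powr (-s)"
      using r by (simp add: p_def powr_realpow[symmetric] powr_add[symmetric])
    finally show ?thesis by simp
  qed
  have summ: "summable a" unfolding aeq
    by (intro summable_mult summable_geometric) (use q in auto)
  have a_nn: "0 \<le> a j" for j unfolding aeq using \<omega> q r by auto
  have meas: "(\<lambda>y. indicator (- ball x \<rho>) y * dist x y powr p) \<in> borel_measurable lebesgue"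
  proof -
    have "(\<lambda>y. indicator (- ball x \<rho>) y * dist x y powr p) \<in> borel_measurable lborel"
      by measurable
    then show ?thesis by (rule measurable_completion)
  qed
  have pt: "ennreal (indicator (- ball x \<rho>) y * dist x y powr p)
      \<le> (\<Sum>j. ennreal ((2^j*\<rho>) powr p) * indicator (ball x (2^(Suc j)*\<rho>)) y)" for y
  proof (cases "dist x y < \<rho>")
    case True then show ?thesis by simp
  next
    case False
    then obtain N where N: "2^N*\<rho> \<le> dist x y" "dist x y < 2^(Suc N)*\<rho>"
      using exN[OF r, of "dist x y"] by auto
    have "dist x y powr p \<le> (2^N*\<rho>) powr p"
      by (rule powr_mono2') (use N r s in \<open>auto simp: p_def\<close>)
    then have "ennreal (indicator (- ball x \<rho>) y * dist x y powr p)
       \<le> ennreal ((2^N*\<rho>) powr p) * indicator (ball x (2^(Suc N)*\<rho>)) y"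
      using False N by (auto simp: indicator_def ennreal_leI)
    also have "\<dots> \<le> (\<Sum>j. ennreal ((2^j*\<rho>) powr p) * indicator (ball x (2^(Suc j)*\<rho>)) y)"
      by (rule ennreal_le_suminf)
    finally show ?thesis .
  qed
  have "(\<integral>\<^sup>+y. ennreal (indicator (- ball x \<rho>) y * dist x y powr p) \<partial>lebesgue)
      \<le> (\<integral>\<^sup>+y. (\<Sum>j. ennreal ((2^j*\<rho>) powr p) * indicator (ball x (2^(Suc j)*\<rho>)) y) \<partial>lebesgue)"
    by (intro nn_integral_mono pt)
  also have "\<dots> = (\<Sum>j. \<integral>\<^sup>+y. ennreal ((2^j*\<rho>) powr p) * indicator (ball x (2^(Suc j)*\<rho>)) y \<partial>lebesgue)"
    by (rule nn_integral_suminf) (intro borel_measurable_times_ennreal borel_measurable_indicator borel_measurable_const fmeasurableD lmeasurable_ball)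
  also have "\<dots> = (\<Sum>j. ennreal (a j))"
  proof (rule suminf_cong)
    fix j
    have "emeasure lebesgue (ball x (2^(Suc j)*\<rho>)) = ennreal (\<omega> * (2^(Suc j)*\<rho>)^DIM('a))"
      unfolding \<omega>_def by (rule emeas_ball) (use r in simp)
    moreover have "ball x (2^(Suc j)*\<rho>) \<in> sets lebesgue" by (intro fmeasurableD lmeasurable_ball)
    ultimately show "(\<integral>\<^sup>+y. ennreal ((2^j*\<rho>) powr p) * indicator (ball x (2^(Suc j)*\<rho>)) y \<partial>lebesgue) = ennreal (a j)"
      using r \<omega> by (simp add: nn_integral_cmult_indicator a_def ennreal_mult[symmetric])
  qed
  also have "\<dots> = ennreal (suminf a)"
    by (rule suminf_ennreal2[OF a_nn summ])
  also have "\<dots> < \<infinity>" by simp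
  finally show ?thesis unfolding p_def[symmetric]
    by (intro integrableI_nonneg meas) auto
qed




lemma lim_aux: fixes c s C :: real assumes "c > 0" "s > 0"
  shows "filterlim (\<lambda>e. c * e powr (-s) - C) at_top (at_right 0)"
  using assms by real_asymp

lemma borel_lebesgue: "E \<in> sets borel \<Longrightarrow> E \<in> sets lebesgue"
  by (simp add: sets_completionI_sets)

theorem lemma4p2:
  fixes s lam Lam :: real
  assumes "0 < s" "s < 1" "0 < lam" "lam \<le> Lam"
  shows "\<exists>\<gamma>>0. \<forall>(K :: 'a::euclidean_space \<Rightarrow> real) E x r0.
     K \<in> borel_measurable lebesgue \<longrightarrow>
     (\<forall>y. y \<noteq> 0 \<longrightarrow> lam * norm y powr (- real DIM('a) - s) \<le> K y
                    \<and> K y \<le> Lam * norm y powr (- real DIM('a) - s)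
                    \<and> K y = K (- y)) \<longrightarrow>
     E \<in> sets borel \<longrightarrow> x \<in> frontier E \<longrightarrow> 0 < r0 \<longrightarrow>
     (\<forall>r. 0 < r \<and> r \<le> r0 \<longrightarrow>
        measure lebesgue (E \<inter> ball x r) \<le> \<gamma> * measure lebesgue (ball (0::'a) r)) \<longrightarrow>
     filterlim (H_trunc K E x) at_top (at_right 0)"
proof -
  note s = assms(1) and lam = assms(3) and Lam = assms(4)
  define p where "p = - real DIM('a) - s"
  define \<omega> where "\<omega> = unit_ball_vol (real DIM('a))"
  define a0 where "a0 = lam * 2 powr p * (2^DIM('a) - 1)"
  define \<gamma> where "\<gamma> = a0 / (2*(lam * 2 powr (-s) + Lam * 2^DIM('a)))"
  have \<omega>: "\<omega> > 0" unfolding \<omega>_def by simp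
  have "(1::real) < 2^DIM('a)" using DIM_positive[where 'a='a]
    by (metis one_less_numeral_iff one_less_power semiring_norm(76))
  then have a0: "a0 > 0" unfolding a0_def using lam by simp
  have den: "lam * 2 powr (-s) + Lam * 2^DIM('a) > 0" using lam Lam by (simp add: add_pos_pos)
  have \<gamma>: "\<gamma> > 0" unfolding \<gamma>_def using a0 den by simp
  have \<gamma>eq: "\<gamma> * (lam * 2 powr (-s) + Lam * 2^DIM('a)) = a0 / 2"
    unfolding \<gamma>_def using den by (simp add: field_simps)
  define c where "c = \<omega> * a0 / 2"
  have c: "c > 0" unfolding c_def using \<omega> a0 by simp
  show ?thesis
  proof (intro exI[of _ \<gamma>] conjI \<gamma> allI impI)
    fix K :: "'a \<Rightarrow> real" and E :: "'a set" and x :: 'a and r0 :: real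
    assume Kmeas: "K \<in> borel_measurable lebesgue"
      and Kb: "\<forall>y. y \<noteq> 0 \<longrightarrow> lam * norm y powr (- real DIM('a) - s) \<le> K y
                    \<and> K y \<le> Lam * norm y powr (- real DIM('a) - s) \<and> K y = K (- y)"
      and Eb: "E \<in> sets borel" and "x \<in> frontier E" and r0: "0 < r0"
      and dens: "\<forall>r. 0 < r \<and> r \<le> r0 \<longrightarrow>
        measure lebesgue (E \<inter> ball x r) \<le> \<gamma> * measure lebesgue (ball (0::'a) r)"
    define f where "f y = K (x - y)" for y :: 'a
    define h where "h y = chi_tilde E y * f y" for y :: 'a
    have fmeas: "f \<in> borel_measurable lebesgue" unfolding f_def by (rule meas_shift[OF Kmeas])
    have EL: "E \<in> sets lebesgue" by (rule borel_lebesgue[OF Eb])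
    have hmeas: "h \<in> borel_measurable lebesgue"
      unfolding h_def chi_tilde_def using fmeas EL by measurable
    have fb: "lam * dist x y powr p \<le> f y \<and> f y \<le> Lam * dist x y powr p" if "y \<noteq> x" for y
      using Kb[rule_format, of "x - y"] that by (simp add: f_def p_def dist_norm)
    have fpos: "0 \<le> f y" if "y \<noteq> x" for y
      using fb[OF that] lam by (smt (verit) powr_ge_zero mult_nonneg_nonneg)
    have chi: "\<bar>chi_tilde E y\<bar> = 1" for y by (simp add: chi_tilde_def indicator_def)
    have ballL: "ball x r \<in> sets lebesgue" for r by (intro fmeasurableD lmeasurable_ball)
    have Fint: "set_integrable lebesgue (- ball x \<rho>) (\<lambda>y. Lam * dist x y powr p)" if "0 < \<rho>" for \<rho>
      using integ_tail[OF s that, of x] unfolding set_integrable_def p_def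
      by (simp add: integrable_mult_right mult.left_commute)
    have sif: "set_integrable lebesgue (- ball x \<rho>) f" if "0 < \<rho>" for \<rho>
    proof (rule set_integrable_bound[OF Fint[OF that]])
      show "set_borel_measurable lebesgue (- ball x \<rho>) f"
        unfolding set_borel_measurable_def using fmeas ballL by measurable
      show "AE y in lebesgue. y \<in> - ball x \<rho> \<longrightarrow> norm (f y) \<le> norm (Lam * dist x y powr p)"
      proof (rule AE_I2, intro impI)
        fix y assume "y \<in> - ball x \<rho>"
        then have "y \<noteq> x" using that by auto
        then show "norm (f y) \<le> norm (Lam * dist x y powr p)" using fb fpos by fastforce
      qed
    qed
    have sih: "set_integrable lebesgue (- ball x \<rho>) h" if "0 < \<rho>" for \<rho>
    proof (rule set_integrable_bound[OF sif[OF that]])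
      show "set_borel_measurable lebesgue (- ball x \<rho>) h"
        unfolding set_borel_measurable_def using hmeas ballL by measurable
      show "AE y in lebesgue. y \<in> - ball x \<rho> \<longrightarrow> norm (h y) \<le> norm (f y)"
        by (rule AE_I2) (simp add: h_def abs_mult chi)
    qed
    define A where "A a b = ball x b - ball x a" for a b
    have AL: "A a b \<in> sets lebesgue" for a b unfolding A_def using ballL by auto
    have sihA: "set_integrable lebesgue (A a b) h" if "0 < a" for a b
      by (rule set_integrable_subset[OF sih[OF that] AL]) (auto simp: A_def)
    have L1: "(LINT y:A \<rho> (2*\<rho>)|lebesgue. h y) \<ge> c * \<rho> powr (-s)" if r: "0 < \<rho>" "2*\<rho> \<le> r0" for \<rho>
    proof -
      define \<alpha> where "\<alpha> = lam * (2*\<rho>) powr p"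
      define \<beta> where "\<beta> = \<alpha> + Lam * \<rho> powr p"
      define g where "g y = \<alpha> - \<beta> * indicator E y" for y :: 'a
      have p0: "p \<le> 0" unfolding p_def using s by simp
      have \<beta>0: "0 \<le> \<beta>" unfolding \<beta>_def \<alpha>_def using lam Lam by simp
      have pt: "g y \<le> h y" if y: "y \<in> A \<rho> (2*\<rho>)" for y
      proof -
        from y have d: "\<rho> \<le> dist x y" "dist x y < 2*\<rho>" by (auto simp: A_def)
        then have yx: "y \<noteq> x" using r by auto
        have "lam * (2*\<rho>) powr p \<le> lam * dist x y powr p"
          using lam d r by (intro mult_left_mono powr_mono2' p0) auto
        then have f1: "\<alpha> \<le> f y" using fb[OF yx] unfolding \<alpha>_def by linarith
        have "Lam * dist x y powr p \<le> Lam * \<rho> powr p"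
          using lam Lam d r by (intro mult_left_mono powr_mono2' p0) auto
        then have f2: "f y \<le> Lam * \<rho> powr p" using fb[OF yx] by linarith
        show ?thesis
          using f1 f2 by (cases "y \<in> E") (auto simp: g_def h_def chi_tilde_def \<beta>_def)
      qed
      have Af: "A \<rho> (2*\<rho>) \<in> fmeasurable lebesgue"
        unfolding A_def by (intro fmeasurable_Diff lmeasurable_ball ballL)
      have AEf: "A \<rho> (2*\<rho>) \<inter> E \<in> fmeasurable lebesgue"
        by (intro fmeasurable_Int_fmeasurable Af EL)
      have geq: "(\<lambda>y. indicator (A \<rho> (2*\<rho>)) y *\<^sub>R g y) =
          (\<lambda>y. \<alpha> * indicator (A \<rho> (2*\<rho>)) y - \<beta> * indicator (A \<rho> (2*\<rho>) \<inter> E) y)"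
        by (auto simp: g_def indicator_def fun_eq_iff)
      have gint: "set_integrable lebesgue (A \<rho> (2*\<rho>)) g"
        unfolding set_integrable_def geq using Af AEf
        by (intro Bochner_Integration.integrable_diff Bochner_Integration.integrable_mult_right integrable_real_indicator) (auto simp: fmeasurable_def)
      have gval: "(LINT y:A \<rho> (2*\<rho>)|lebesgue. g y) =
          \<alpha> * measure lebesgue (A \<rho> (2*\<rho>)) - \<beta> * measure lebesgue (A \<rho> (2*\<rho>) \<inter> E)"
        unfolding set_lebesgue_integral_def geq using Af AEf
        by (subst Bochner_Integration.integral_diff) (auto simp: fmeasurable_def)
      have mA: "measure lebesgue (A \<rho> (2*\<rho>)) = \<omega> * (2*\<rho>)^DIM('a) - \<omega> * \<rho>^DIM('a)"
      proof -
        have "emeasure lebesgue (ball x (2*\<rho>)) \<noteq> \<infinity>"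
          using emeas_ball[of "2*\<rho>" x] r by simp
        then have "measure lebesgue (ball x (2*\<rho>) - ball x \<rho>) = measure lebesgue (ball x (2*\<rho>)) - measure lebesgue (ball x \<rho>)"
          by (intro measure_Diff ballL) (use r in auto)
        moreover have "measure lebesgue (ball x (2*\<rho>)) = \<omega> * (2*\<rho>)^DIM('a)"
          unfolding \<omega>_def using r by (intro meas_ball) simp
        moreover have "measure lebesgue (ball x \<rho>) = \<omega> * \<rho>^DIM('a)"
          unfolding \<omega>_def using r by (intro meas_ball) simp
        ultimately show ?thesis unfolding A_def by linarith
      qed
      have "measure lebesgue (A \<rho> (2*\<rho>) \<inter> E) \<le> measure lebesgue (E \<inter> ball x (2*\<rho>))"
      proof (rule measure_mono_fmeasurable)
        show "A \<rho> (2*\<rho>) \<inter> E \<subseteq> E \<inter> ball x (2*\<rho>)" by (auto simp: A_def)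
        show "A \<rho> (2*\<rho>) \<inter> E \<in> sets lebesgue" using AEf by (rule fmeasurableD)
        show "E \<inter> ball x (2*\<rho>) \<in> fmeasurable lebesgue"
          using fmeasurable_Int_fmeasurable[OF lmeasurable_ball EL, of x "2*\<rho>"] by (simp add: Int_commute)
      qed
      also have "\<dots> \<le> \<gamma> * measure lebesgue (ball (0::'a) (2*\<rho>))" using dens r by simp
      also have "\<dots> = \<gamma> * (\<omega> * (2*\<rho>)^DIM('a))" unfolding \<omega>_def using r by (subst meas_ball) auto
      finally have mAE: "measure lebesgue (A \<rho> (2*\<rho>) \<inter> E) \<le> \<gamma> * (\<omega> * (2*\<rho>)^DIM('a))" .
      define u where "u = \<rho> powr p"
      define v where "v = \<rho> ^ DIM('a)"
      define T where "T = (2::real) ^ DIM('a)"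
      define P where "P = (2::real) powr p"
      have e1: "(2*\<rho>) powr p = P * u" unfolding P_def u_def using r by (simp add: powr_mult)
      have e2: "(2*\<rho>)^DIM('a) = T * v" unfolding T_def v_def by (simp add: power_mult_distrib)
      have e3: "u * v = \<rho> powr (-s)" unfolding u_def v_def p_def using r
        by (simp add: powr_realpow[symmetric] powr_add[symmetric])
      have e4: "P * T = 2 powr (-s)" unfolding P_def T_def p_def
        by (simp add: powr_realpow[symmetric] powr_add[symmetric])
      have "c * \<rho> powr (-s) = \<alpha> * (\<omega> * (2*\<rho>)^DIM('a) - \<omega> * \<rho>^DIM('a)) - \<beta> * (\<gamma> * (\<omega> * (2*\<rho>)^DIM('a)))"
      proof -
        have "\<alpha> * (\<omega> * (2*\<rho>)^DIM('a) - \<omega> * \<rho>^DIM('a)) - \<beta> * (\<gamma> * (\<omega> * (2*\<rho>)^DIM('a)))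
          = \<omega> * (u * v) * (lam * P * (T - 1) - \<gamma> * (lam * (P * T) + Lam * T))"
          unfolding \<beta>_def \<alpha>_def e1 e2 v_def[symmetric] u_def[symmetric] by (simp add: algebra_simps)
        also have "\<dots> = c * \<rho> powr (-s)"
        proof -
          have e4': "P * 2^DIM('a) = 2 powr (-s)" using e4 unfolding T_def .
          have g1: "\<gamma> * (lam * (P * T) + Lam * T) = a0/2" unfolding T_def e4' using \<gamma>eq .
          have g2: "a0 = lam * P * (T - 1)" unfolding a0_def P_def T_def by simp
          show ?thesis unfolding g1 e3 c_def g2 by (simp add: field_simps)
        qed
        finally show ?thesis by simp
      qed
      also have "\<dots> \<le> \<alpha> * measure lebesgue (A \<rho> (2*\<rho>)) - \<beta> * measure lebesgue (A \<rho> (2*\<rho>) \<inter> E)"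
        unfolding mA using mAE \<beta>0 by (simp add: mult_left_mono)
      also have "\<dots> = (LINT y:A \<rho> (2*\<rho>)|lebesgue. g y)" by (rule gval[symmetric])
      also have "\<dots> \<le> (LINT y:A \<rho> (2*\<rho>)|lebesgue. h y)"
        by (rule set_integral_mono[OF gint sihA pt]) (use r in auto)
      finally show ?thesis .
    qed
    have L2: "\<forall>\<rho>. 0 < \<rho> \<longrightarrow> 2^(Suc N)*\<rho> \<le> r0 \<longrightarrow>
        (LINT y:A \<rho> (2^(Suc N)*\<rho>)|lebesgue. h y) \<ge> c * \<rho> powr (-s)" for N
    proof (induction N)
      case 0 then show ?case using L1 by simp
    next
      case (Suc N)
      show ?case
      proof (intro allI impI)
        fix \<rho> :: real assume r: "0 < \<rho>" "2^(Suc (Suc N))*\<rho> \<le> r0"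
        have "(2::real) \<le> 2^(Suc (Suc N))" proof -
          have "(1::real) \<le> 2^N" by (rule one_le_power) simp
          then show ?thesis by (simp only: power_Suc)
        qed
        then have le2: "2*\<rho> \<le> 2^(Suc (Suc N))*\<rho>" using r(1) by (intro mult_right_mono) auto
        then have "2*\<rho> \<le> r0" using r(2) by linarith
        then have L: "c * \<rho> powr (-s) \<le> (LINT y:A \<rho> (2*\<rho>)|lebesgue. h y)" using L1 r(1) by blast
        have "c * (2*\<rho>) powr (-s) \<le> (LINT y:A (2*\<rho>) (2^(Suc N)*(2*\<rho>))|lebesgue. h y)"
        proof -
          have e1: "2^(Suc N)*(2*\<rho>) = 2^(Suc(Suc N))*\<rho>" by simp
          show ?thesis using Suc.IH[rule_format, of "2*\<rho>"] r unfolding e1 by simp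
        qed
        moreover have "0 \<le> c * (2*\<rho>) powr (-s)" using c by simp
        moreover have AU: "A \<rho> (2^(Suc (Suc N))*\<rho>) = A \<rho> (2*\<rho>) \<union> A (2*\<rho>) (2^(Suc N)*(2*\<rho>))"
        proof -
          have e1: "2^(Suc N)*(2*\<rho>) = 2^(Suc(Suc N))*\<rho>" by simp
          have gen: "ball x M - ball x \<rho> = (ball x (2*\<rho>) - ball x \<rho>) \<union> (ball x M - ball x (2*\<rho>))"
            if "2*\<rho> \<le> M" for M using that r(1) by auto
          show ?thesis unfolding e1 A_def by (rule gen[OF le2])
        qed
        moreover have SU: "(LINT y:A \<rho> (2*\<rho>) \<union> A (2*\<rho>) (2^(Suc N)*(2*\<rho>))|lebesgue. h y) =
            (LINT y:A \<rho> (2*\<rho>)|lebesgue. h y) + (LINT y:A (2*\<rho>) (2^(Suc N)*(2*\<rho>))|lebesgue. h y)"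
        proof (rule set_integral_Un)
          show "A \<rho> (2*\<rho>) \<inter> A (2*\<rho>) (2^(Suc N)*(2*\<rho>)) = {}" by (auto simp: A_def)
          show "set_integrable lebesgue (A \<rho> (2*\<rho>)) h" by (rule sihA) (use r in simp)
          show "set_integrable lebesgue (A (2*\<rho>) (2^(Suc N)*(2*\<rho>))) h" by (rule sihA) (use r in simp)
        qed
        ultimately show "c * \<rho> powr (-s) \<le> (LINT y:A \<rho> (2^(Suc (Suc N))*\<rho>)|lebesgue. h y)"
          using L unfolding AU SU by linarith
      qed
    qed
    define C0 where "C0 = (LINT y:- ball x (r0/2)|lebesgue. f y)"
    have bound: "c * \<epsilon> powr (-s) - C0 \<le> H_trunc K E x \<epsilon>" if e: "0 < \<epsilon>" "2*\<epsilon> \<le> r0" for \<epsilon>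
    proof -
      obtain N where N: "2^N*(2*\<epsilon>) \<le> r0" "r0 < 2^(Suc N)*(2*\<epsilon>)"
        using exN[of "2*\<epsilon>" r0] e by auto
      define R where "R = 2^(Suc N)*\<epsilon>"
      have RN: "2^N*(2*\<epsilon>) = R" unfolding R_def by simp
      have RN2: "2^(Suc N)*(2*\<epsilon>) = 2*R" unfolding R_def by simp
      have R1: "R \<le> r0" "r0/2 < R" using N unfolding RN RN2 by auto
      have "(2::real) \<le> 2^(Suc N)"
      proof -
        have "(1::real) \<le> 2^N" by (rule one_le_power) simp
        then show ?thesis by (simp only: power_Suc)
      qed
      then have "1*\<epsilon> \<le> 2^(Suc N)*\<epsilon>" using e by (intro mult_right_mono; linarith)
      then have R2: "\<epsilon> \<le> R" unfolding R_def by simp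
      have R0: "0 < R" using R2 e by simp
      have H: "H_trunc K E x \<epsilon> = (LINT y:- ball x \<epsilon>|lebesgue. h y)"
        by (simp add: H_trunc_def h_def f_def)
      have split: "- ball x \<epsilon> = A \<epsilon> R \<union> - ball x R" unfolding A_def using R2 by auto
      have SU: "(LINT y:A \<epsilon> R \<union> - ball x R|lebesgue. h y) =
          (LINT y:A \<epsilon> R|lebesgue. h y) + (LINT y:- ball x R|lebesgue. h y)"
      proof (rule set_integral_Un)
        show "A \<epsilon> R \<inter> - ball x R = {}" by (auto simp: A_def)
        show "set_integrable lebesgue (A \<epsilon> R) h" by (rule sihA) (use e in simp)
        show "set_integrable lebesgue (- ball x R) h" by (rule sih[OF R0])
      qed
      have I1: "c * \<epsilon> powr (-s) \<le> (LINT y:A \<epsilon> R|lebesgue. h y)"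
        using L2[of N, rule_format, of \<epsilon>] e R1 unfolding R_def by simp
      have mf: "set_integrable lebesgue (- ball x R) (\<lambda>y. - f y)"
        using sif[OF R0] unfolding set_integrable_def by simp
      have "- (LINT y:- ball x R|lebesgue. f y) = (LINT y:- ball x R|lebesgue. - f y)"
        by (rule set_integral_uminus[OF sif[OF R0], symmetric])
      also have "\<dots> \<le> (LINT y:- ball x R|lebesgue. h y)"
      proof (rule set_integral_mono[OF mf sih[OF R0]])
        fix y assume "y \<in> - ball x R"
        then have yx: "y \<noteq> x" using R0 by auto
        show "- f y \<le> h y" using fpos[OF yx] chi[of y]
          by (simp add: h_def abs_if split: if_splits)
      qed
      finally have I2a: "- (LINT y:- ball x R|lebesgue. f y) \<le> (LINT y:- ball x R|lebesgue. h y)" .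
      have r02: "0 < r0/2" using r0 by simp
      have "(LINT y:- ball x R|lebesgue. f y) \<le> C0"
        unfolding C0_def set_lebesgue_integral_def
      proof (rule Bochner_Integration.integral_mono)
        show "integrable lebesgue (\<lambda>y. indicator (- ball x R) y *\<^sub>R f y)"
          using sif[OF R0] unfolding set_integrable_def .
        show "integrable lebesgue (\<lambda>y. indicator (- ball x (r0/2)) y *\<^sub>R f y)"
          using sif[OF r02] unfolding set_integrable_def .
        fix y
        show "indicator (- ball x R) y *\<^sub>R f y \<le> indicator (- ball x (r0/2)) y *\<^sub>R f y"
        proof (cases "y \<in> - ball x R")
          case True
          then have "y \<in> - ball x (r0/2)" using R1 by auto
          then show ?thesis using True by simp
        next
          case False
          show ?thesis
          proof (cases "y = x")
            case True then show ?thesis using False R0 r02 by simp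
          next
            case yx: False
            show ?thesis using False fpos[OF yx] by (simp add: indicator_def)
          qed
        qed
      qed
      then show ?thesis unfolding H split SU using I1 I2a by linarith
    qed
    have ev: "eventually (\<lambda>\<epsilon>. c * \<epsilon> powr (-s) - C0 \<le> H_trunc K E x \<epsilon>) (at_right 0)"
      unfolding eventually_at_right_field
      by (rule exI[of _ "r0/2"]) (use r0 bound in auto)
    show "filterlim (H_trunc K E x) at_top (at_right 0)"
      by (rule filterlim_at_top_mono[OF lim_aux[OF c s] ev])
  qed
qed

end
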